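(* For all $n\ge 0$, the quadruples of statistics $(\operatorname{asc},\operatorname{des},\operatorname{MNA},\operatorname{MND})$ and $(\operatorname{des},\operatorname{asc},\operatorname{MND},\operatorname{MNA})$ are equidistributed on $S_n(213,231)$, i.e. $$\sum_{\pi\in S_n(213,231)} t_1^{\operatorname{asc}(\pi)}t_2^{\operatorname{des}(\pi)}t_3^{\operatorname{MNA}(\pi)}t_4^{\operatorname{MND}(\pi)}=\sum_{\pi\in S_n(213,231)} t_1^{\operatorname{des}(\pi)}t_2^{\operatorname{asc}(\pi)}t_3^{\operatorname{MND}(\pi)}t_4^{\operatorname{MNA}(\pi)}.$$
   Context: For $n\ge 0$, $S_n$ denotes the set of permutations $\pi=\pi_1\cdots\pi_n$ of $[n]=\{1,\dots,n\}$. $\pi$ avoids a pattern $\tau\in S_k$ if no subsequence $\pi_{i_1}\cdots\pi_{i_k}$ ($i_1<\dots<i_k$) satisfies $\pi_{i_a}<\pi_{i_b}\iff\tau_a<\tau_b$; $S_n(\tau,\rho)$ is the set of permutations in $S_n$ avoiding both $\tau$ and $\rho$. $\operatorname{asc}(\pi)$ (resp. $\operatorname{des}(\pi)$) is the number of $i\in[n-1]$ with $\pi_i<\pi_{i+1}$ (resp. $\pi_i>\pi_{i+1}$). $\operatorname{MNA}(\pi)$ is the maximum size of a set $I\subseteq[n-1]$ such that $\pi_i<\pi_{i+1}$ for all $i\in I$ and $|i-j|\ge 2$ for distinct $i,j\in I$; $\operatorname{MND}(\pi)$ is defined analogously with $\pi_i>\pi_{i+1}$. *)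

theory Defs
  imports "HOL-Combinatorics.Multiset_Permutations"
begin

(* Permutations of [n] are lists; pi_i (1-based) is xs ! (i - 1). *)

definition Sn :: "nat \<Rightarrow> nat list set" where
  "Sn n = permutations_of_set {1..n}"

definition contains :: "nat list \<Rightarrow> nat list \<Rightarrow> bool" where
  "contains xs tau \<longleftrightarrow>
     (\<exists>idx :: nat \<Rightarrow> nat. strict_mono_on {0..<length tau} idx \<and>
        (\<forall>a<length tau. idx a < length xs) \<and>
        (\<forall>a<length tau. \<forall>b<length tau.
            (xs ! idx a < xs ! idx b) \<longleftrightarrow> (tau ! a < tau ! b)))"

definition avoids :: "nat list \<Rightarrow> nat list \<Rightarrow> bool" where
  "avoids xs tau \<longleftrightarrow> \<not> contains xs tau"

definition Sn2 :: "nat \<Rightarrow> nat list \<Rightarrow> nat list \<Rightarrow> nat list set" where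
  "Sn2 n tau rho = {xs \<in> Sn n. avoids xs tau \<and> avoids xs rho}"

definition asc_set :: "nat list \<Rightarrow> nat set" where
  "asc_set xs = {i \<in> {1..length xs - 1}. xs ! (i - 1) < xs ! i}"

definition des_set :: "nat list \<Rightarrow> nat set" where
  "des_set xs = {i \<in> {1..length xs - 1}. xs ! (i - 1) > xs ! i}"

definition asc :: "nat list \<Rightarrow> nat" where
  "asc xs = card (asc_set xs)"

definition des :: "nat list \<Rightarrow> nat" where
  "des xs = card (des_set xs)"

definition nonadjacent :: "nat set \<Rightarrow> bool" where
  "nonadjacent I \<longleftrightarrow> (\<forall>i\<in>I. \<forall>j\<in>I. i \<noteq> j \<longrightarrow> 2 \<le> (if i \<le> j then j - i else i - j))"

definition MNA :: "nat list \<Rightarrow> nat" where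
  "MNA xs = Max (card ` {I. I \<subseteq> asc_set xs \<and> nonadjacent I})"

definition MND :: "nat list \<Rightarrow> nat" where
  "MND xs = Max (card ` {I. I \<subseteq> des_set xs \<and> nonadjacent I})"

end

theory Submission
  imports Defs
begin
definition cmp :: "nat \<Rightarrow> nat list \<Rightarrow> nat list" where
  "cmp n xs = map (\<lambda>x. Suc n - x) xs"

lemma cmp_less:
  assumes "\<forall>x\<in>set xs. x \<le> n" "i < length xs" "j < length xs"
  shows "(cmp n xs ! i < cmp n xs ! j) = (xs ! j < xs ! i)"
proof -
  have "xs ! i \<le> n" "xs ! j \<le> n" using assms by auto
  then show ?thesis using assms(2,3) by (simp add: cmp_def) linarith
qed

lemma contains_cmp:
  assumes "\<forall>x\<in>set xs. x \<le> n" "\<forall>t\<in>set tau. t \<le> k"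
  shows "contains (cmp n xs) tau \<longleftrightarrow> contains xs (cmp k tau)"
proof -
  have lc: "length (cmp k tau) = length tau" "length (cmp n xs) = length xs" by (simp_all add: cmp_def)
  have key: "(\<forall>a<length tau. \<forall>b<length tau. (cmp n xs ! idx a < cmp n xs ! idx b) = (tau ! a < tau ! b)) =
    (\<forall>a<length tau. \<forall>b<length tau. (xs ! idx a < xs ! idx b) = (cmp k tau ! a < cmp k tau ! b))"
    if L: "\<forall>a<length tau. idx a < length xs" for idx
  proof -
    have X: "(cmp n xs ! idx a < cmp n xs ! idx b) = (xs ! idx b < xs ! idx a)"
      "(cmp k tau ! a < cmp k tau ! b) = (tau ! b < tau ! a)"
      if "a < length tau" "b < length tau" for a b
      using cmp_less[OF assms(1), of "idx a" "idx b"] cmp_less[OF assms(2), of a b] L that by auto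
    show ?thesis
    proof
      assume H: "\<forall>a<length tau. \<forall>b<length tau. (cmp n xs ! idx a < cmp n xs ! idx b) = (tau ! a < tau ! b)"
      show "\<forall>a<length tau. \<forall>b<length tau. (xs ! idx a < xs ! idx b) = (cmp k tau ! a < cmp k tau ! b)"
      proof (intro allI impI)
        fix a b assume ab: "a < length tau" "b < length tau"
        show "(xs ! idx a < xs ! idx b) = (cmp k tau ! a < cmp k tau ! b)"
          using H[rule_format, OF ab(2) ab(1)] X[OF ab(2) ab(1)] X[OF ab] by simp
      qed
    next
      assume H: "\<forall>a<length tau. \<forall>b<length tau. (xs ! idx a < xs ! idx b) = (cmp k tau ! a < cmp k tau ! b)"
      show "\<forall>a<length tau. \<forall>b<length tau. (cmp n xs ! idx a < cmp n xs ! idx b) = (tau ! a < tau ! b)"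
      proof (intro allI impI)
        fix a b assume ab: "a < length tau" "b < length tau"
        show "(cmp n xs ! idx a < cmp n xs ! idx b) = (tau ! a < tau ! b)"
          using H[rule_format, OF ab(2) ab(1)] X[OF ab(2) ab(1)] X[OF ab] by simp
      qed
    qed
  qed
  show ?thesis unfolding contains_def lc
    apply (rule ex_cong1)
    using key by blast
qed

lemma asc_cmp:
  assumes "\<forall>x\<in>set xs. x \<le> n"
  shows "asc_set (cmp n xs) = des_set xs" "des_set (cmp n xs) = asc_set xs"
proof -
  have lc: "length (cmp n xs) = length xs" by (simp add: cmp_def)
  have "i \<in> {1..length xs - 1} \<Longrightarrow> (cmp n xs ! (i-1) < cmp n xs ! i) = (xs ! i < xs ! (i-1))
     \<and> (cmp n xs ! i < cmp n xs ! (i-1)) = (xs ! (i-1) < xs ! i)" for i 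
    using cmp_less[OF assms, of "i-1" i] cmp_less[OF assms, of i "i-1"] by auto
  then show "asc_set (cmp n xs) = des_set xs" "des_set (cmp n xs) = asc_set xs"
    unfolding asc_set_def des_set_def lc by auto
qed
lemma Sn_cmp:
  assumes "xs \<in> Sn n"
  shows "cmp n xs \<in> Sn n" "cmp n (cmp n xs) = xs" "\<forall>x\<in>set xs. x \<le> n"
proof -
  have s: "set xs = {1..n}" and d: "distinct xs"
    using assms by (auto simp: Sn_def permutations_of_set_def)
  show "\<forall>x\<in>set xs. x \<le> n" using s by auto
  have inj: "inj_on (\<lambda>x. Suc n - x) {1..n}" by (auto simp: inj_on_def)
  have im: "(\<lambda>x. Suc n - x) ` {1..n} = {1..n}"
  proof
    show "{1..n} \<subseteq> (\<lambda>x. Suc n - x) ` {1..n}"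
    proof
      fix y assume "y \<in> {1..n}"
      then show "y \<in> (\<lambda>x. Suc n - x) ` {1..n}"
        by (intro image_eqI[of _ _ "Suc n - y"]) auto
    qed
  qed auto
  show "cmp n xs \<in> Sn n"
    using s d inj im by (auto simp: Sn_def permutations_of_set_def cmp_def distinct_map)
  show "cmp n (cmp n xs) = xs"
    using s by (auto simp: cmp_def intro!: map_idI)
qed

lemma Sn2_cmp:
  assumes "xs \<in> Sn2 n [2,1,3] [2,3,1]"
  shows "cmp n xs \<in> Sn2 n [2,1,3] [2,3,1]"
proof -
  have xs: "xs \<in> Sn n" and a1: "avoids xs [2,1,3]" and a2: "avoids xs [2,3,1]"
    using assms by (auto simp: Sn2_def)
  have b: "\<forall>x\<in>set xs. x \<le> n" using Sn_cmp(3)[OF xs] .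
  have c1: "cmp 3 [2,1,3] = [2,3,1]" "cmp 3 [2,3,1] = [2,1,3]" by (simp_all add: cmp_def)
  have e1: "contains (cmp n xs) [2,1,3] = contains xs [2,3,1]"
    using contains_cmp[OF b, of "[2,1,3]" 3] unfolding c1 by simp
  have e2: "contains (cmp n xs) [2,3,1] = contains xs [2,1,3]"
    using contains_cmp[OF b, of "[2,3,1]" 3] unfolding c1 by simp
  show ?thesis
    using Sn_cmp(1)[OF xs] a1 a2 e1 e2 by (simp add: Sn2_def avoids_def)
qed

theorem theorem13:
  fixes n :: nat and t1 t2 t3 t4 :: "'a :: comm_semiring_1"
  shows "(\<Sum>\<pi>\<in>Sn2 n [2,1,3] [2,3,1].
            t1 ^ asc \<pi> * t2 ^ des \<pi> * t3 ^ MNA \<pi> * t4 ^ MND \<pi>)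
       = (\<Sum>\<pi>\<in>Sn2 n [2,1,3] [2,3,1].
            t1 ^ des \<pi> * t2 ^ asc \<pi> * t3 ^ MND \<pi> * t4 ^ MNA \<pi>)"
proof (rule sum.reindex_bij_witness[where i = "cmp n" and j = "cmp n"])
  fix b assume b: "b \<in> Sn2 n [2,1,3] [2,3,1]"
  then have "b \<in> Sn n" by (simp add: Sn2_def)
  then show "cmp n (cmp n b) = b" using Sn_cmp(2) by blast
  show "cmp n b \<in> Sn2 n [2,1,3] [2,3,1]" using Sn2_cmp[OF b] .
next
  fix a assume a: "a \<in> Sn2 n [2,1,3] [2,3,1]"
  then have xs: "a \<in> Sn n" by (simp add: Sn2_def)
  show "cmp n (cmp n a) = a" using Sn_cmp(2)[OF xs] .
  show "cmp n a \<in> Sn2 n [2,1,3] [2,3,1]" using Sn2_cmp[OF a] .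
  have b: "\<forall>x\<in>set a. x \<le> n" using Sn_cmp(3)[OF xs] .
  show "t1 ^ des (cmp n a) * t2 ^ asc (cmp n a) * t3 ^ MND (cmp n a) * t4 ^ MNA (cmp n a) =
        t1 ^ asc a * t2 ^ des a * t3 ^ MNA a * t4 ^ MND a"
    using asc_cmp[OF b] by (simp add: asc_def des_def MNA_def MND_def)
qed

end
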